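(* For every PICOD hypergraph $\mathcal{H}$ with $\Delta(\mathcal{H})\ge 1$ and every prime power $q$, $\beta_q(\mathcal{H})\le\Delta(\mathcal{H})$.
   Context: PICOD problem: a server holds $m$ messages $b_1,\dots,b_m\in\mathbb{F}_q$; there are $n$ clients, client $i$ having side-information $\{b_j: j\in S_i\}$, $S_i\subseteq[m]$, and request-set $R_i=[m]\setminus S_i$ (assumed non-empty); client $i$ wants any one message $b_j$ with $j\in R_i$. A PICOD scheme of length $\ell$ over $\mathbb{F}_q$ is an encoding map $\phi:\mathbb{F}_q^m\to\mathbb{F}_q^\ell$ such that for every client $i$ there is an index $j_i\in R_i$ and a function $\psi_i$ with $\psi_i(\phi(b),(b_k)_{k\in S_i})=b_{j_i}$ for all $b\in\mathbb{F}_q^m$. The PICOD hypergraph $\mathcal{H}$ has vertex set $[m]$ and edge set $\{R_i:i\in[n]\}$. $\beta_q(\mathcal{H})$ is the minimum length of a PICOD scheme for $\mathcal{H}$ over $\mathbb{F}_q$. The degree of a vertex is the number of edges containing it, and $\Delta(\mathcal{H})$ is the maximum degree over all vertices. *)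

theory Defs
  imports Main
begin

text \<open>Messages b_1..b_m are modelled as vectors b :: nat => 'q indexed by 0..m-1
  (entries outside {0..<m} are fixed to 0). Clients are indexed by 0..n-1;
  client i has request set R i (a subset of {0..<m}) and side information
  S_i = {0..<m} - R i.\<close>

definition msgs :: "nat \<Rightarrow> (nat \<Rightarrow> 'q::zero) set" where
  "msgs m = {b. \<forall>j. j \<ge> m \<longrightarrow> b j = 0}"

definition side_info :: "nat \<Rightarrow> nat set \<Rightarrow> (nat \<Rightarrow> 'q::zero) \<Rightarrow> (nat \<Rightarrow> 'q)" where
  "side_info m Ri b = (\<lambda>k. if k \<in> {0..<m} - Ri then b k else 0)"

definition picod_scheme ::
  "nat \<Rightarrow> nat \<Rightarrow> (nat \<Rightarrow> nat set) \<Rightarrow> nat \<Rightarrow> ((nat \<Rightarrow> 'q::field) \<Rightarrow> 'q list) \<Rightarrow> bool" where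
  "picod_scheme m n R l \<phi> \<longleftrightarrow>
     (\<forall>b \<in> msgs m. length (\<phi> b) = l) \<and>
     (\<forall>i<n. \<exists>j \<in> R i. \<exists>\<psi> :: 'q list \<Rightarrow> (nat \<Rightarrow> 'q) \<Rightarrow> 'q.
        \<forall>b \<in> msgs m. \<psi> (\<phi> b) (side_info m (R i) b) = b j)"

definition beta :: "'q::field itself \<Rightarrow> nat \<Rightarrow> nat \<Rightarrow> (nat \<Rightarrow> nat set) \<Rightarrow> nat" where
  "beta _ m n R = (LEAST l. \<exists>\<phi> :: (nat \<Rightarrow> 'q) \<Rightarrow> 'q list. picod_scheme m n R l \<phi>)"

definition edges :: "nat \<Rightarrow> (nat \<Rightarrow> nat set) \<Rightarrow> nat set set" where
  "edges n R = R ` {..<n}"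

definition degree :: "nat \<Rightarrow> (nat \<Rightarrow> nat set) \<Rightarrow> nat \<Rightarrow> nat" where
  "degree n R v = card {e \<in> edges n R. v \<in> e}"

definition max_degree :: "nat \<Rightarrow> nat \<Rightarrow> (nat \<Rightarrow> nat set) \<Rightarrow> nat" where
  "max_degree m n R = Max (insert 0 (degree n R ` {..<m}))"

definition picod_hypergraph :: "nat \<Rightarrow> nat \<Rightarrow> (nat \<Rightarrow> nat set) \<Rightarrow> bool" where
  "picod_hypergraph m n R \<longleftrightarrow> (\<forall>i<n. R i \<subseteq> {0..<m} \<and> R i \<noteq> {})"

end

theory Submission
  imports Defs
begin

lemma cover:
  fixes E :: "nat set set"
  assumes "finite E" "\<forall>e\<in>E. e \<subseteq> {0..<m} \<and> e \<noteq> {}"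
    "\<forall>v<m. card {e\<in>E. v\<in>e} \<le> d"
  shows "\<exists>Ts. length Ts = d \<and> (\<forall>T\<in>set Ts. T \<subseteq> {0..<m}) \<and>
               (\<forall>e\<in>E. \<exists>T\<in>set Ts. card (e \<inter> T) = 1)"
  using assms
proof (induction d arbitrary: E)
  case 0
  have "E = {}"
  proof (rule ccontr)
    assume "E \<noteq> {}"
    then obtain e where e: "e \<in> E" by blast
    with 0 obtain v where v: "v \<in> e" "v < m" by fastforce
    have "finite {e\<in>E. v\<in>e}" using 0 by simp
    moreover have "e \<in> {e\<in>E. v\<in>e}" using e v by simp
    ultimately have "card {e\<in>E. v\<in>e} > 0" by (metis card_0_eq empty_iff gr0I)
    with 0 v e show False by auto
  qed
  then show ?case by simp
next
  case (Suc d)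
  define A where "A = {T. T \<subseteq> {0..<m} \<and> (\<forall>e\<in>E. card (e \<inter> T) \<le> 1)}"
  have fA: "finite A" unfolding A_def by (rule finite_subset[of _ "Pow {0..<m}"]) auto
  have "{} \<in> A" unfolding A_def by simp
  then obtain T where TA: "T \<in> A" and Tmax: "\<forall>B\<in>A. T \<subseteq> B \<longrightarrow> T = B"
    using finite_has_maximal[OF fA] by blast
  have Tsub: "T \<subseteq> {0..<m}" and Tle: "\<forall>e\<in>E. card (e \<inter> T) \<le> 1" using TA A_def by auto
  have fT: "finite T" using Tsub finite_subset by blast
  define E' where "E' = {e\<in>E. card (e \<inter> T) \<noteq> 1}"
  have f1: "finite E'" using Suc.prems E'_def by simp
  have f2: "\<forall>e\<in>E'. e \<subseteq> {0..<m} \<and> e \<noteq> {}" using Suc.prems E'_def by simp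
  have f3: "\<forall>v<m. card {e\<in>E'. v\<in>e} \<le> d"
  proof (intro allI impI)
    fix v assume vm: "v < m"
    show "card {e\<in>E'. v\<in>e} \<le> d"
    proof (cases "\<exists>e\<in>E. v \<in> e")
      case False
      then have "{e\<in>E'. v\<in>e} = {}" using E'_def by auto
      then show ?thesis by (simp only: card.empty le0)
    next
      case True
      then obtain e0 where e0: "e0 \<in> E" "v \<in> e0" by blast
      have "\<exists>e\<in>E. v \<in> e \<and> card (e \<inter> T) = 1"
      proof (cases "v \<in> T")
        case True
        have "e0 \<inter> T \<noteq> {}" using True e0 by blast
        moreover have "finite (e0 \<inter> T)" using fT by simp
        ultimately have "card (e0 \<inter> T) \<ge> 1"
          by (metis One_nat_def Suc_leI card_gt_0_iff)
        then show ?thesis using Tle e0 by (metis le_antisym)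
      next
        case False
        have "insert v T \<notin> A" using Tmax False by blast
        moreover have "insert v T \<subseteq> {0..<m}" using vm Tsub by auto
        ultimately obtain e where e: "e \<in> E" "card (e \<inter> insert v T) > 1"
          unfolding A_def by (auto simp: not_le)
        have ve: "v \<in> e"
        proof (rule ccontr)
          assume "v \<notin> e"
          then have "e \<inter> insert v T = e \<inter> T" by auto
          then show False using e Tle by (metis not_le)
        qed
        then have eq: "e \<inter> insert v T = insert v (e \<inter> T)" by auto
        have "card (insert v (e \<inter> T)) = Suc (card (e \<inter> T))"
          using False fT by simp
        then have "card (e \<inter> T) \<ge> 1" using e eq by simp
        then show ?thesis using Tle e ve by (metis le_antisym)
      qed
      then obtain e where e: "e\<in>E" "v\<in>e" "card (e \<inter> T) = 1" by blast
      have "{e\<in>E'. v\<in>e} \<subset> {e\<in>E. v\<in>e}" using e E'_def by auto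
      moreover have "finite {e\<in>E. v\<in>e}" using Suc.prems by simp
      ultimately have "card {e\<in>E'. v\<in>e} < card {e\<in>E. v\<in>e}" by (rule psubset_card_mono[rotated])
      moreover have "card {e\<in>E. v\<in>e} \<le> Suc d" using Suc.prems(3) vm by blast
      ultimately show ?thesis by linarith
    qed
  qed
  obtain Ts where Ts: "length Ts = d" "\<forall>T\<in>set Ts. T \<subseteq> {0..<m}"
    "\<forall>e\<in>E'. \<exists>T\<in>set Ts. card (e \<inter> T) = 1" using Suc.IH[OF f1 f2 f3] by blast
  show ?case
  proof (intro exI[of _ "T # Ts"] conjI)
    show "length (T # Ts) = Suc d" using Ts by simp
    show "\<forall>T\<in>set (T # Ts). T \<subseteq> {0..<m}" using Ts Tsub by simp
    show "\<forall>e\<in>E. \<exists>T\<in>set (T # Ts). card (e \<inter> T) = 1"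
    proof
      fix e assume e: "e \<in> E"
      show "\<exists>T\<in>set (T # Ts). card (e \<inter> T) = 1"
      proof (cases "card (e \<inter> T) = 1")
        case True then show ?thesis by simp
      next
        case False
        then have "e \<in> E'" using e E'_def by simp
        then obtain T' where "T' \<in> set Ts" "card (e \<inter> T') = 1" using Ts(3) by blast
        then show ?thesis by auto
      qed
    qed
  qed
qed

theorem theorem1:
  fixes m n :: nat and R :: "nat \<Rightarrow> nat set"
  assumes "picod_hypergraph m n R"
    and "max_degree m n R \<ge> 1"
  shows "beta TYPE('q::{finite,field}) m n R \<le> max_degree m n R"
proof -
  let ?E = "edges n R"
  let ?d = "max_degree m n R"
  have fE: "finite ?E" unfolding edges_def by simp
  have E1: "\<forall>e\<in>?E. e \<subseteq> {0..<m} \<and> e \<noteq> {}"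
    using assms(1) unfolding edges_def picod_hypergraph_def by auto
  have E2: "\<forall>v<m. card {e\<in>?E. v\<in>e} \<le> ?d"
  proof (intro allI impI)
    fix v assume "v < m"
    then have "degree n R v \<in> insert 0 (degree n R ` {..<m})" by simp
    then have "degree n R v \<le> ?d" unfolding max_degree_def by (intro Max_ge) auto
    then show "card {e\<in>?E. v\<in>e} \<le> ?d" by (simp add: degree_def)
  qed
  obtain Ts where Ts: "length Ts = ?d" "\<forall>T\<in>set Ts. T \<subseteq> {0..<m}"
    "\<forall>e\<in>?E. \<exists>T\<in>set Ts. card (e \<inter> T) = 1" using cover[OF fE E1 E2] by blast
  define \<phi> where "\<phi> = (\<lambda>b::nat\<Rightarrow>'q. map (\<lambda>T. \<Sum>t\<in>T. b t) Ts)"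
  have "picod_scheme m n R ?d \<phi>"
    unfolding picod_scheme_def
  proof (intro conjI ballI allI impI)
    fix b :: "nat \<Rightarrow> 'q" show "length (\<phi> b) = ?d" using Ts \<phi>_def by simp
  next
    fix i assume "i < n"
    then have "R i \<in> ?E" unfolding edges_def by simp
    then obtain T where T: "T \<in> set Ts" "card (R i \<inter> T) = 1" using Ts(3) by blast
    then obtain j where j: "R i \<inter> T = {j}" using card_1_singletonE by blast
    obtain k where k: "k < length Ts" "Ts ! k = T" using T(1) by (meson in_set_conv_nth)
    have Tsub: "T \<subseteq> {0..<m}" using Ts(2) T(1) by blast
    have fT: "finite T" using Tsub finite_subset by blast
    define \<psi> where "\<psi> = (\<lambda>(y::'q list) (s::nat\<Rightarrow>'q). y ! k - (\<Sum>t\<in>T-{j}. s t))"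
    show "\<exists>j\<in>R i. \<exists>\<psi> :: 'q list \<Rightarrow> (nat \<Rightarrow> 'q) \<Rightarrow> 'q.
        \<forall>b \<in> msgs m. \<psi> (\<phi> b) (side_info m (R i) b) = b j"
    proof (intro bexI[of _ j] exI[of _ \<psi>] ballI)
      show "j \<in> R i" using j by blast
      fix b :: "nat \<Rightarrow> 'q"
      have jT: "j \<in> T" using j by blast
      have s: "(\<Sum>t\<in>T-{j}. side_info m (R i) b t) = (\<Sum>t\<in>T-{j}. b t)"
      proof (rule sum.cong)
        fix t assume t: "t \<in> T - {j}"
        then have "t \<notin> R i" using j by blast
        moreover have "t < m" using t Tsub by auto
        ultimately show "side_info m (R i) b t = b t" unfolding side_info_def by simp
      qed simp
      have "(\<Sum>t\<in>T. b t) = b j + (\<Sum>t\<in>T-{j}. b t)" using sum.remove[OF fT jT] by simp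
      then show "\<psi> (\<phi> b) (side_info m (R i) b) = b j"
        unfolding \<psi>_def \<phi>_def using k s by simp
    qed
  qed
  then show ?thesis unfolding beta_def by (intro Least_le) blast
qed

end
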